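(* Consider a stationary memoryless uncertain channel with single-symbol map $N$ as described in the context, and let $0\le\delta_1<m_{\mathscr{Y}}(V_N)$. Let $\bar X$ be a one-step transmitted UV with $[\![\bar X]\!]\subseteq\mathscr{X}$, $\bar Y$ its received UV, and $\bar\delta\ge0$ such that $\bar X\in\mathscr{F}_{\bar\delta}(1)$, $\bar\delta\le\delta_1/m_{\mathscr{Y}}([\![\bar Y]\!])$, and $$I_{\bar\delta/|[\![\bar X]\!]|}(\bar Y;\bar X)=\sup\Big\{I_{\tilde\delta/|[\![X(1)]\!]|}(Y(1);X(1)) : \tilde\delta\ge0,\ X(1)\in\mathscr{F}_{\tilde\delta}(1),\ \tilde\delta\le\delta_1/m_{\mathscr{Y}}([\![Y(1)]\!])\Big\}.$$ Suppose that (a) for every $x\in\mathscr{X}\setminus[\![\bar X]\!]$ there is $S\in[\![\bar Y|\bar X]\!]^*_{\bar\delta/|[\![\bar X]\!]|}$ with $N(x)\subseteq S$; (b) $\bar\delta(1+1/|[\![\bar X]\!]|)\le\delta_1/m_{\mathscr{Y}}([\![\bar Y]\!])$; and (c) for all $n>1$, $0\le\delta_n\le(\bar\delta\, m_{\mathscr{Y}}(V_N)/|[\![\bar X]\!]|)^n$. Then, under the product uncertainty assumption and the union bound assumption, $C_N(\{\delta_n\})^*=I_{\bar\delta/|[\![\bar X]\!]|}(\bar Y;\bar X)$.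
   Context: Uncertain variables (UVs): a UV is a map $U$ from a sample space $\Omega$ to a set; jointly considered UVs share $\Omega$. $[\![U]\!]=\{U(\omega)\}$; $[\![U|w]\!]=\{U(\omega):W(\omega)=w\}$, $[\![U|W]\!]=\{[\![U|w]\!]:w\in[\![W]\!]\}$. An uncertainty function on a set $\mathscr{U}$ is a map $m$ on subsets of $\mathscr{U}$ with $m(\emptyset)=0$, $0<m(S)<\infty$ for nonempty $S$, $\max\{m(S_1),m(S_2)\}\le m(S_1\cup S_2)$. Association: $\mathscr{A}(X;Y)=\{m_{\mathscr{X}}([\![X|y_1]\!]\cap[\![X|y_2]\!])/m_{\mathscr{X}}([\![X]\!]):y_1\ne y_2\in[\![Y]\!]\}\setminus\{0\}$, $\mathscr{A}(Y;X)=\{m_{\mathscr{Y}}([\![Y|x_1]\!]\cap[\![Y|x_2]\!])/m_{\mathscr{Y}}([\![Y]\!]):x_1\ne x_2\in[\![X]\!]\}\setminus\{0\}$; $\mathscr{A}\succ\delta$: all elements $>\delta$ (false for $\emptyset$); $\mathscr{A}\preceq\delta$: all elements $\le\delta$ (true for $\emptyset$); $(X,Y)\stackrel{d}{\leftrightarrow}(\delta_1,\delta_2)$ iff $\mathscr{A}(X;Y)\succ\delta_1,\mathscr{A}(Y;X)\succ\delta_2$; $(X,Y)\stackrel{a}{\leftrightarrow}(\delta_1,\delta_2)$ iff $\mathscr{A}(X;Y)\preceq\delta_1,\mathscr{A}(Y;X)\preceq\delta_2$. $\delta$-mutual information: for UVs $U$ (with uncertainty function $m_{\mathscr{U}}$)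 and $W$, $u,u'\in[\![U]\!]$ are $\delta$-connected via $[\![U|W]\!]$ if there are $w_1,\dots,w_N\in[\![W]\!]$ with $u\in[\![U|w_1]\!]$, $u'\in[\![U|w_N]\!]$, $m_{\mathscr{U}}([\![U|w_i]\!]\cap[\![U|w_{i-1}]\!])/m_{\mathscr{U}}([\![U]\!])>\delta$ for $1<i\le N$; a set is $\delta$-connected if all pairs of its points are. A $\delta$-overlap family $[\![U|W]\!]^*_\delta$ is a family of distinct subsets covering $[\![U]\!]$, of largest cardinality among covering families with (i) each member $\delta$-connected and containing some $[\![U|w]\!]$; (ii) distinct members $S_1,S_2$ satisfy $m_{\mathscr{U}}(S_1\cap S_2)\le\delta\,m_{\mathscr{U}}([\![U]\!])$; (iii) each $[\![U|w]\!]$ contained in some member. $I_\delta(U;W)=\log_2|[\![U|W]\!]^*_\delta|$ if such a family exists, else $0$. Stationary memoryless channel: $\mathscr{X}$ is a totally bounded normed metric space, $\mathscr{Y}$ an output set, $N:\mathscr{X}\to2^{\mathscr{Y}}$; for $x(1:n)\in\mathscr{X}^n$, $S_N(x(1:n))=N(x(1))\times\cdots\times N(x(n))$. $m_{\mathscr{Y}}$ (resp. $m_{\mathscr{X}}$) is an uncertainty function on each $\mathscr{Y}^n$ (resp. $\mathscr{X}^n$), with $m_{\mathscr{Y}}(\mathscr{Y}^n)=1$. $V_N=N(x^* )$ with $x^*$ minimizing $m_{\mathscr{Y}}(N(x))$; $V_N^n=V_N\times\cdots\times V_N$. A discrete $\mathcal{C}_n\subseteq\mathscr{X}^n$ is $(N,\delta_n)$-distinguishable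 (for $0\le\delta_n<m_{\mathscr{Y}}(V_N^n)$) if $m_{\mathscr{Y}}(S_N(x_1(1:n))\cap S_N(x_2(1:n)))/m_{\mathscr{Y}}(\mathscr{Y}^n)\le\delta_n/|\mathcal{C}_n|$ for all distinct codewords; $R_{\delta_n}=\sup\frac1n\log_2|\mathcal{C}_n|$ over such codebooks; $C_N(\{\delta_n\})^*=\sup_{n\ge1}R_{\delta_n}$. For a codebook $\mathcal{C}_n$, transmitted UV $X(1:n)$ and received UV $Y(1:n)$ satisfy $[\![X(1:n)]\!]=\mathcal{C}_n$, $[\![Y(1:n)]\!]=\bigcup_{x(1:n)\in\mathcal{C}_n}S_N(x(1:n))$, $[\![Y(1:n)|x(1:n)]\!]=\{y\in[\![Y(1:n)]\!]:y\in S_N(x(1:n))\}$, $[\![X(1:n)|y(1:n)]\!]=\{x\in[\![X(1:n)]\!]:y(1:n)\in S_N(x)\}$. $\mathscr{F}_\delta(n)$ is the set of transmitted UVs $X(1:n)$ with $[\![X(1:n)]\!]\subseteq\mathscr{X}^n$ such that $(X(1:n),Y(1:n))\stackrel{d}{\leftrightarrow}(0,\delta/|[\![X(1:n)]\!]|)$ or $(X(1:n),Y(1:n))\stackrel{a}{\leftrightarrow}(1,\delta/|[\![X(1:n)]\!]|)$. Product uncertainty assumption: $m_{\mathscr{Y}}(S_1\times\cdots\times S_n)=\prod_i m_{\mathscr{Y}}(S_i)$ for all $n$ and $S_i\subseteq\mathscr{Y}$. Union bound assumption: $m_{\mathscr{Y}}(S_1\cup S_2)\le m_{\mathscr{Y}}(S_1)+m_{\mathscr{Y}}(S_2)$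 for $S_1,S_2\subseteq\mathscr{Y}^n$. *)

theory Defs
  imports Complex_Main "HOL-Library.Extended_Real"
begin

definition uv_range :: "'w set \<Rightarrow> ('w \<Rightarrow> 'a) \<Rightarrow> 'a set" where
  "uv_range \<Omega> U = U ` \<Omega>"

definition uv_cond :: "'w set \<Rightarrow> ('w \<Rightarrow> 'a) \<Rightarrow> ('w \<Rightarrow> 'b) \<Rightarrow> 'b \<Rightarrow> 'a set" where
  "uv_cond \<Omega> U W w = U ` {\<omega> \<in> \<Omega>. W \<omega> = w}"

definition uv_condfam :: "'w set \<Rightarrow> ('w \<Rightarrow> 'a) \<Rightarrow> ('w \<Rightarrow> 'b) \<Rightarrow> 'a set set" where
  "uv_condfam \<Omega> U W = uv_cond \<Omega> U W ` uv_range \<Omega> W"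

definition uncertainty_fun :: "'a set \<Rightarrow> ('a set \<Rightarrow> real) \<Rightarrow> bool" where
  "uncertainty_fun UU m \<longleftrightarrow>
     m {} = 0 \<and> (\<forall>S. S \<subseteq> UU \<and> S \<noteq> {} \<longrightarrow> 0 < m S) \<and>
     (\<forall>S1 S2. S1 \<subseteq> UU \<longrightarrow> S2 \<subseteq> UU \<longrightarrow> max (m S1) (m S2) \<le> m (S1 \<union> S2))"

definition assoc :: "'w set \<Rightarrow> ('a set \<Rightarrow> real) \<Rightarrow> ('w \<Rightarrow> 'a) \<Rightarrow> ('w \<Rightarrow> 'b) \<Rightarrow> real set" where
  "assoc \<Omega> m U W =
     {m (uv_cond \<Omega> U W w1 \<inter> uv_cond \<Omega> U W w2) / m (uv_range \<Omega> U) | w1 w2.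
        w1 \<in> uv_range \<Omega> W \<and> w2 \<in> uv_range \<Omega> W \<and> w1 \<noteq> w2} - {0}"

definition set_succ :: "real set \<Rightarrow> real \<Rightarrow> bool" where
  "set_succ A \<delta> \<longleftrightarrow> A \<noteq> {} \<and> (\<forall>a\<in>A. a > \<delta>)"

definition set_preceq :: "real set \<Rightarrow> real \<Rightarrow> bool" where
  "set_preceq A \<delta> \<longleftrightarrow> (\<forall>a\<in>A. a \<le> \<delta>)"

definition d_assoc :: "'w set \<Rightarrow> ('x set \<Rightarrow> real) \<Rightarrow> ('y set \<Rightarrow> real) \<Rightarrow> ('w \<Rightarrow> 'x) \<Rightarrow> ('w \<Rightarrow> 'y)
    \<Rightarrow> real \<Rightarrow> real \<Rightarrow> bool" where
  "d_assoc \<Omega> mX mY X Y \<delta>1 \<delta>2 \<longleftrightarrow>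
     set_succ (assoc \<Omega> mX X Y) \<delta>1 \<and> set_succ (assoc \<Omega> mY Y X) \<delta>2"

definition a_assoc :: "'w set \<Rightarrow> ('x set \<Rightarrow> real) \<Rightarrow> ('y set \<Rightarrow> real) \<Rightarrow> ('w \<Rightarrow> 'x) \<Rightarrow> ('w \<Rightarrow> 'y)
    \<Rightarrow> real \<Rightarrow> real \<Rightarrow> bool" where
  "a_assoc \<Omega> mX mY X Y \<delta>1 \<delta>2 \<longleftrightarrow>
     set_preceq (assoc \<Omega> mX X Y) \<delta>1 \<and> set_preceq (assoc \<Omega> mY Y X) \<delta>2"

definition delta_conn_pts :: "'w set \<Rightarrow> ('a set \<Rightarrow> real) \<Rightarrow> ('w \<Rightarrow> 'a) \<Rightarrow> ('w \<Rightarrow> 'b) \<Rightarrow> real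
    \<Rightarrow> 'a \<Rightarrow> 'a \<Rightarrow> bool" where
  "delta_conn_pts \<Omega> m U W \<delta> u u' \<longleftrightarrow>
     (\<exists>ws. ws \<noteq> [] \<and> set ws \<subseteq> uv_range \<Omega> W \<and>
        u \<in> uv_cond \<Omega> U W (hd ws) \<and> u' \<in> uv_cond \<Omega> U W (last ws) \<and>
        (\<forall>i. 0 < i \<and> i < length ws \<longrightarrow>
           m (uv_cond \<Omega> U W (ws ! i) \<inter> uv_cond \<Omega> U W (ws ! (i - 1))) / m (uv_range \<Omega> U) > \<delta>))"

definition delta_conn_set :: "'w set \<Rightarrow> ('a set \<Rightarrow> real) \<Rightarrow> ('w \<Rightarrow> 'a) \<Rightarrow> ('w \<Rightarrow> 'b) \<Rightarrow> real
    \<Rightarrow> 'a set \<Rightarrow> bool" where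
  "delta_conn_set \<Omega> m U W \<delta> S \<longleftrightarrow> (\<forall>u\<in>S. \<forall>u'\<in>S. delta_conn_pts \<Omega> m U W \<delta> u u')"

definition overlap_valid :: "'w set \<Rightarrow> ('a set \<Rightarrow> real) \<Rightarrow> ('w \<Rightarrow> 'a) \<Rightarrow> ('w \<Rightarrow> 'b) \<Rightarrow> real
    \<Rightarrow> 'a set set \<Rightarrow> bool" where
  "overlap_valid \<Omega> m U W \<delta> F \<longleftrightarrow>
     (\<forall>S\<in>F. S \<subseteq> uv_range \<Omega> U) \<and> \<Union>F = uv_range \<Omega> U \<and>
     (\<forall>S\<in>F. delta_conn_set \<Omega> m U W \<delta> S \<and> (\<exists>w\<in>uv_range \<Omega> W. uv_cond \<Omega> U W w \<subseteq> S)) \<and>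
     (\<forall>S1\<in>F. \<forall>S2\<in>F. S1 \<noteq> S2 \<longrightarrow> m (S1 \<inter> S2) \<le> \<delta> * m (uv_range \<Omega> U)) \<and>
     (\<forall>w\<in>uv_range \<Omega> W. \<exists>S\<in>F. uv_cond \<Omega> U W w \<subseteq> S)"

text \<open>A delta-overlap family: valid, and of largest cardinality (every valid family injects into it).\<close>
definition overlap_family :: "'w set \<Rightarrow> ('a set \<Rightarrow> real) \<Rightarrow> ('w \<Rightarrow> 'a) \<Rightarrow> ('w \<Rightarrow> 'b) \<Rightarrow> real
    \<Rightarrow> 'a set set \<Rightarrow> bool" where
  "overlap_family \<Omega> m U W \<delta> F \<longleftrightarrow>
     overlap_valid \<Omega> m U W \<delta> F \<and>
     (\<forall>G. overlap_valid \<Omega> m U W \<delta> G \<longrightarrow> (\<exists>f. inj_on f G \<and> f ` G \<subseteq> F))"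

definition I_delta :: "'w set \<Rightarrow> ('a set \<Rightarrow> real) \<Rightarrow> ('w \<Rightarrow> 'a) \<Rightarrow> ('w \<Rightarrow> 'b) \<Rightarrow> real \<Rightarrow> ereal" where
  "I_delta \<Omega> m U W \<delta> =
     (if \<exists>F. overlap_family \<Omega> m U W \<delta> F then
        (let F = (SOME F. overlap_family \<Omega> m U W \<delta> F) in
           if finite F then ereal (log 2 (real (card F))) else \<infinity>)
      else 0)"

text \<open>Sequences of length n are lists of length n. One-symbol uncertainty via singleton lists.\<close>
definition seqs :: "nat \<Rightarrow> 'a set \<Rightarrow> 'a list set" where
  "seqs n A = {xs. length xs = n \<and> set xs \<subseteq> A}"

definition prod_set :: "nat \<Rightarrow> (nat \<Rightarrow> 'a set) \<Rightarrow> 'a list set" where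
  "prod_set n S = {ys. length ys = n \<and> (\<forall>i<n. ys ! i \<in> S i)}"

definition m1 :: "('a list set \<Rightarrow> real) \<Rightarrow> 'a set \<Rightarrow> real" where
  "m1 m S = m ((\<lambda>a. [a]) ` S)"

definition S_N :: "('x \<Rightarrow> 'y set) \<Rightarrow> 'x list \<Rightarrow> 'y list set" where
  "S_N N xs = prod_set (length xs) (\<lambda>i. N (xs ! i))"

definition distinguishable :: "'x set \<Rightarrow> ('x \<Rightarrow> 'y set) \<Rightarrow> ('y list set \<Rightarrow> real) \<Rightarrow> nat \<Rightarrow> real
    \<Rightarrow> 'x list set \<Rightarrow> bool" where
  "distinguishable XX N mY n \<delta>n C \<longleftrightarrow>
     finite C \<and> C \<noteq> {} \<and> C \<subseteq> seqs n XX \<and>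
     (\<forall>c1\<in>C. \<forall>c2\<in>C. c1 \<noteq> c2 \<longrightarrow>
        mY (S_N N c1 \<inter> S_N N c2) / mY (seqs n UNIV) \<le> \<delta>n / real (card C))"

definition rate :: "'x set \<Rightarrow> ('x \<Rightarrow> 'y set) \<Rightarrow> ('y list set \<Rightarrow> real) \<Rightarrow> nat \<Rightarrow> real \<Rightarrow> ereal" where
  "rate XX N mY n \<delta>n =
     (SUP C \<in> {C. distinguishable XX N mY n \<delta>n C}. ereal (log 2 (real (card C)) / real n))"

definition capacity_star :: "'x set \<Rightarrow> ('x \<Rightarrow> 'y set) \<Rightarrow> ('y list set \<Rightarrow> real) \<Rightarrow> (nat \<Rightarrow> real) \<Rightarrow> ereal" where
  "capacity_star XX N mY \<delta> = (SUP n \<in> {1..}. rate XX N mY n (\<delta> n))"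

definition channel_pair :: "'x set \<Rightarrow> ('x \<Rightarrow> 'y set) \<Rightarrow> 'w set \<Rightarrow> ('w \<Rightarrow> 'x) \<Rightarrow> ('w \<Rightarrow> 'y) \<Rightarrow> bool" where
  "channel_pair XX N \<Omega> X Y \<longleftrightarrow>
     finite (uv_range \<Omega> X) \<and> uv_range \<Omega> X \<noteq> {} \<and> uv_range \<Omega> X \<subseteq> XX \<and>
     uv_range \<Omega> Y = (\<Union>x\<in>uv_range \<Omega> X. N x) \<and>
     (\<forall>x\<in>uv_range \<Omega> X. uv_cond \<Omega> Y X x = {y \<in> uv_range \<Omega> Y. y \<in> N x}) \<and>
     (\<forall>y\<in>uv_range \<Omega> Y. uv_cond \<Omega> X Y y = {x \<in> uv_range \<Omega> X. y \<in> N x})"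

definition in_F1 :: "('x list set \<Rightarrow> real) \<Rightarrow> ('y list set \<Rightarrow> real) \<Rightarrow> 'w set \<Rightarrow> ('w \<Rightarrow> 'x) \<Rightarrow> ('w \<Rightarrow> 'y)
    \<Rightarrow> real \<Rightarrow> bool" where
  "in_F1 mX mY \<Omega> X Y \<delta> \<longleftrightarrow>
     d_assoc \<Omega> (m1 mX) (m1 mY) X Y 0 (\<delta> / real (card (uv_range \<Omega> X))) \<or>
     a_assoc \<Omega> (m1 mX) (m1 mY) X Y 1 (\<delta> / real (card (uv_range \<Omega> X)))"

text \<open>Canonical realisation of the transmitted/received UVs for a one-step codebook C:
  sample space = joint range, X = fst, Y = snd.\<close>
definition chan_sample :: "('x \<Rightarrow> 'y set) \<Rightarrow> 'x set \<Rightarrow> ('x \<times> 'y) set" where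
  "chan_sample N C = {(x, y). x \<in> C \<and> y \<in> N x}"

end

theory Submission imports Defs begin

lemma m1_mono:
  assumes "uncertainty_fun (seqs 1 UNIV) m" "A \<subseteq> B"
  shows "m1 m A \<le> m1 m B"
proof -
  have s: "(\<lambda>a. [a]) ` A \<subseteq> seqs 1 UNIV" "(\<lambda>a. [a]) ` B \<subseteq> seqs 1 UNIV"
    by (auto simp: seqs_def)
  have "max (m ((\<lambda>a. [a]) ` A)) (m ((\<lambda>a. [a]) ` B)) \<le> m ((\<lambda>a. [a]) ` A \<union> (\<lambda>a. [a]) ` B)"
    using assms(1) s unfolding uncertainty_fun_def by blast
  moreover have "(\<lambda>a. [a]) ` A \<union> (\<lambda>a. [a]) ` B = (\<lambda>a. [a]) ` B" using assms(2) by auto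
  ultimately show ?thesis unfolding m1_def by simp
qed

lemma m1_pos:
  assumes "uncertainty_fun (seqs 1 UNIV) m" "S \<noteq> {}"
  shows "0 < m1 m S"
proof -
  have s: "(\<lambda>a. [a]) ` S \<subseteq> seqs 1 UNIV" by (auto simp: seqs_def)
  moreover have "(\<lambda>a. [a]) ` S \<noteq> {}" using assms(2) by auto
  ultimately show ?thesis using assms(1) unfolding uncertainty_fun_def m1_def by blast
qed

lemma m1_empty: "uncertainty_fun UU m \<Longrightarrow> m1 m {} = 0"
  by (simp add: m1_def uncertainty_fun_def)

lemma m1X_mono:
  assumes "uncertainty_fun (seqs 1 XX) m" "A \<subseteq> B" "B \<subseteq> XX"
  shows "m1 m A \<le> m1 m B"
proof -
  have s: "(\<lambda>a. [a]) ` A \<subseteq> seqs 1 XX" "(\<lambda>a. [a]) ` B \<subseteq> seqs 1 XX"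
    using assms by (auto simp: seqs_def)
  have "max (m ((\<lambda>a. [a]) ` A)) (m ((\<lambda>a. [a]) ` B)) \<le> m ((\<lambda>a. [a]) ` A \<union> (\<lambda>a. [a]) ` B)"
    using assms(1) s unfolding uncertainty_fun_def by blast
  moreover have "(\<lambda>a. [a]) ` A \<union> (\<lambda>a. [a]) ` B = (\<lambda>a. [a]) ` B" using assms(2) by auto
  ultimately show ?thesis unfolding m1_def by simp
qed

lemma m1X_pos:
  assumes "uncertainty_fun (seqs 1 XX) m" "S \<noteq> {}" "S \<subseteq> XX"
  shows "0 < m1 m S"
proof -
  have s: "(\<lambda>a. [a]) ` S \<subseteq> seqs 1 XX" using assms by (auto simp: seqs_def)
  moreover have "(\<lambda>a. [a]) ` S \<noteq> {}" using assms(2) by auto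
  ultimately show ?thesis using assms(1) unfolding uncertainty_fun_def m1_def by blast
qed

lemma uv_cond_sub: "uv_cond \<Omega> U W w \<subseteq> uv_range \<Omega> U"
  by (auto simp: uv_cond_def uv_range_def)

lemma I_delta_eq:
  assumes "overlap_family \<Omega> m U W \<delta> G" "finite G"
  shows "I_delta \<Omega> m U W \<delta> = ereal (log 2 (real (card G)))"
proof -
  define F0 where "F0 = (SOME F. overlap_family \<Omega> m U W \<delta> F)"
  have of: "overlap_family \<Omega> m U W \<delta> F0" unfolding F0_def using assms(1) by (rule someI)
  obtain f where f: "inj_on f G" "f ` G \<subseteq> F0"
    using of assms(1) unfolding overlap_family_def by blast
  obtain g where g: "inj_on g F0" "g ` F0 \<subseteq> G"
    using of assms(1) unfolding overlap_family_def by blast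
  have fin: "finite F0" using inj_on_finite[OF g assms(2)] .
  have "card F0 \<le> card G" using card_inj_on_le[OF g assms(2)] .
  moreover have "card G \<le> card F0" using card_inj_on_le[OF f fin] .
  ultimately have "card F0 = card G" by simp
  have ex: "\<exists>F. overlap_family \<Omega> m U W \<delta> F" using assms(1) by blast
  show ?thesis unfolding I_delta_def Let_def F0_def[symmetric] using ex fin \<open>card F0 = card G\<close> by simp
qed

lemma chan_range_fst: "\<forall>x\<in>C. N x \<noteq> {} \<Longrightarrow> uv_range (chan_sample N C) fst = C"
  unfolding uv_range_def chan_sample_def
proof (intro equalityI subsetI)
  fix x assume "x \<in> fst ` {(x, y). x \<in> C \<and> y \<in> N x}" then show "x \<in> C" by auto
next
  fix x assume "\<forall>x\<in>C. N x \<noteq> {}" "x \<in> C"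
  then obtain y where "y \<in> N x" by auto
  then show "x \<in> fst ` {(x, y). x \<in> C \<and> y \<in> N x}" using \<open>x \<in> C\<close>
    by (intro image_eqI[of _ _ "(x,y)"]) auto
qed

lemma chan_range_snd: "uv_range (chan_sample N C) snd = (\<Union>x\<in>C. N x)"
  unfolding uv_range_def chan_sample_def
proof (intro equalityI subsetI)
  fix y assume "y \<in> snd ` {(x, y). x \<in> C \<and> y \<in> N x}" then show "y \<in> (\<Union>x\<in>C. N x)" by auto
next
  fix y assume "y \<in> (\<Union>x\<in>C. N x)"
  then obtain x where "x \<in> C" "y \<in> N x" by auto
  then show "y \<in> snd ` {(x, y). x \<in> C \<and> y \<in> N x}"
    by (intro image_eqI[of _ _ "(x,y)"]) auto
qed

lemma chan_cond_snd: "x \<in> C \<Longrightarrow> uv_cond (chan_sample N C) snd fst x = N x"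
  unfolding uv_cond_def chan_sample_def
proof (intro equalityI subsetI)
  fix y assume "y \<in> snd ` {\<omega> \<in> {(x, y). x \<in> C \<and> y \<in> N x}. fst \<omega> = x}" then show "y \<in> N x" by auto
next
  fix y assume "x \<in> C" "y \<in> N x"
  then show "y \<in> snd ` {\<omega> \<in> {(x, y). x \<in> C \<and> y \<in> N x}. fst \<omega> = x}"
    by (intro image_eqI[of _ _ "(x,y)"]) auto
qed
lemma chan_conn:
  assumes ne: "\<forall>x\<in>C. N x \<noteq> {}" and x: "x \<in> C"
  shows "delta_conn_set (chan_sample N C) m snd fst d (N x)"
  unfolding delta_conn_set_def delta_conn_pts_def
proof (intro ballI)
  fix u u' assume u: "u \<in> N x" "u' \<in> N x"
  have "[x] \<noteq> [] \<and> set [x] \<subseteq> uv_range (chan_sample N C) fst \<and>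
        u \<in> uv_cond (chan_sample N C) snd fst (hd [x]) \<and> u' \<in> uv_cond (chan_sample N C) snd fst (last [x]) \<and>
        (\<forall>i. 0 < i \<and> i < length [x] \<longrightarrow>
           m (uv_cond (chan_sample N C) snd fst ([x] ! i) \<inter> uv_cond (chan_sample N C) snd fst ([x] ! (i - 1))) / m (uv_range (chan_sample N C) snd) > d)"
    using u x chan_range_fst[OF ne] chan_cond_snd[OF x, of N] by simp
  then show "\<exists>ws. ws \<noteq> [] \<and> set ws \<subseteq> uv_range (chan_sample N C) fst \<and>
        u \<in> uv_cond (chan_sample N C) snd fst (hd ws) \<and> u' \<in> uv_cond (chan_sample N C) snd fst (last ws) \<and>
        (\<forall>i. 0 < i \<and> i < length ws \<longrightarrow>
           m (uv_cond (chan_sample N C) snd fst (ws ! i) \<inter> uv_cond (chan_sample N C) snd fst (ws ! (i - 1))) / m (uv_range (chan_sample N C) snd) > d)"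
    by blast
qed

lemma overlap_validD:
  assumes "overlap_valid \<Omega> m U W \<delta> F"
  shows "\<forall>S\<in>F. S \<subseteq> uv_range \<Omega> U"
    and "\<Union>F = uv_range \<Omega> U"
    and "\<forall>S\<in>F. delta_conn_set \<Omega> m U W \<delta> S \<and> (\<exists>w\<in>uv_range \<Omega> W. uv_cond \<Omega> U W w \<subseteq> S)"
    and "\<forall>S1\<in>F. \<forall>S2\<in>F. S1 \<noteq> S2 \<longrightarrow> m (S1 \<inter> S2) \<le> \<delta> * m (uv_range \<Omega> U)"
    and "\<forall>w\<in>uv_range \<Omega> W. \<exists>S\<in>F. uv_cond \<Omega> U W w \<subseteq> S"
  using assms unfolding overlap_valid_def
  apply -
  apply (elim conjE, assumption)+
  done

lemma chan_family:
  assumes unc: "uncertainty_fun (seqs 1 UNIV) mY"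
    and ne: "\<forall>x\<in>C. N x \<noteq> {}"
    and big: "\<forall>x\<in>C. m1 mY (N x) > d * m1 mY (\<Union>x\<in>C. N x)"
    and small: "\<forall>x\<in>C. \<forall>x'\<in>C. x \<noteq> x' \<longrightarrow> m1 mY (N x \<inter> N x') \<le> d * m1 mY (\<Union>x\<in>C. N x)"
  shows "overlap_family (chan_sample N C) (m1 mY) snd fst d (N ` C)"
proof -
  let ?\<Omega> = "chan_sample N C"
  have rf: "uv_range ?\<Omega> fst = C" by (rule chan_range_fst[OF ne])
  have rs: "uv_range ?\<Omega> snd = (\<Union>x\<in>C. N x)" by (rule chan_range_snd)
  have cs: "\<And>x. x \<in> C \<Longrightarrow> uv_cond ?\<Omega> snd fst x = N x" by (rule chan_cond_snd)
  have v1: "\<forall>S\<in>N ` C. S \<subseteq> uv_range ?\<Omega> snd" unfolding rs by blast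
  have v2: "\<Union>(N ` C) = uv_range ?\<Omega> snd" unfolding rs by simp
  have v3: "\<forall>S\<in>N ` C. delta_conn_set ?\<Omega> (m1 mY) snd fst d S \<and>
      (\<exists>w\<in>uv_range ?\<Omega> fst. uv_cond ?\<Omega> snd fst w \<subseteq> S)"
  proof
    fix S assume "S \<in> N ` C"
    then obtain x where x: "x \<in> C" "S = N x" by blast
    have "delta_conn_set ?\<Omega> (m1 mY) snd fst d S" using chan_conn[OF ne x(1)] x(2) by simp
    moreover have "\<exists>w\<in>uv_range ?\<Omega> fst. uv_cond ?\<Omega> snd fst w \<subseteq> S"
      unfolding rf using x cs[OF x(1)] by blast
    ultimately show "delta_conn_set ?\<Omega> (m1 mY) snd fst d S \<and>
      (\<exists>w\<in>uv_range ?\<Omega> fst. uv_cond ?\<Omega> snd fst w \<subseteq> S)" by blast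
  qed
  have v4: "\<forall>S1\<in>N ` C. \<forall>S2\<in>N ` C. S1 \<noteq> S2 \<longrightarrow> m1 mY (S1 \<inter> S2) \<le> d * m1 mY (uv_range ?\<Omega> snd)"
  proof (intro ballI impI)
    fix S1 S2 assume S: "S1 \<in> N ` C" "S2 \<in> N ` C" "S1 \<noteq> S2"
    then obtain x1 x2 where x: "x1 \<in> C" "x2 \<in> C" "S1 = N x1" "S2 = N x2" by blast
    then have "x1 \<noteq> x2" using S(3) by blast
    then have "m1 mY (N x1 \<inter> N x2) \<le> d * m1 mY (\<Union>x\<in>C. N x)" using small x by blast
    then show "m1 mY (S1 \<inter> S2) \<le> d * m1 mY (uv_range ?\<Omega> snd)" unfolding rs x(3,4) .
  qed
  have v5: "\<forall>w\<in>uv_range ?\<Omega> fst. \<exists>S\<in>N ` C. uv_cond ?\<Omega> snd fst w \<subseteq> S"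
    unfolding rf using cs by blast
  have valid: "overlap_valid ?\<Omega> (m1 mY) snd fst d (N ` C)"
    unfolding overlap_valid_def by (intro conjI v1 v2 v3 v4 v5)
  have "\<exists>f. inj_on f G \<and> f ` G \<subseteq> N ` C" if G: "overlap_valid ?\<Omega> (m1 mY) snd fst d G" for G
  proof -
    have "\<forall>S\<in>G. \<exists>w. w \<in> C \<and> N w \<subseteq> S"
    proof
      fix S assume "S \<in> G"
      then obtain w where "w \<in> uv_range ?\<Omega> fst" "uv_cond ?\<Omega> snd fst w \<subseteq> S"
        using overlap_validD(3)[OF G] \<open>S \<in> G\<close> by blast
      then show "\<exists>w. w \<in> C \<and> N w \<subseteq> S" using rf cs[of w] by auto
    qed
    then obtain h where h: "\<forall>S\<in>G. h S \<in> C \<and> N (h S) \<subseteq> S" by (rule bchoice[elim_format]) blast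
    have "inj_on (\<lambda>S. N (h S)) G"
    proof (rule inj_onI, rule ccontr)
      fix S1 S2 assume S: "S1 \<in> G" "S2 \<in> G" "N (h S1) = N (h S2)" "S1 \<noteq> S2"
      have G4: "\<forall>S1\<in>G. \<forall>S2\<in>G. S1 \<noteq> S2 \<longrightarrow> m1 mY (S1 \<inter> S2) \<le> d * m1 mY (uv_range ?\<Omega> snd)"
        by (rule overlap_validD(4)[OF G])
      have a: "m1 mY (S1 \<inter> S2) \<le> d * m1 mY (\<Union>x\<in>C. N x)"
        using G4 S unfolding rs by blast
      have "N (h S1) \<subseteq> S1 \<inter> S2" using S h by auto
      then have b: "m1 mY (N (h S1)) \<le> m1 mY (S1 \<inter> S2)" by (rule m1_mono[OF unc])
      have c: "m1 mY (N (h S1)) > d * m1 mY (\<Union>x\<in>C. N x)" using big h S by auto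
      show False using a b c by linarith
    qed
    then show ?thesis using h by (intro exI[of _ "\<lambda>S. N (h S)"]) auto
  qed
  then show ?thesis using valid unfolding overlap_family_def by (intro conjI allI impI) auto
qed

lemma prod_set_Int: "prod_set n S \<inter> prod_set n T = prod_set n (\<lambda>i. S i \<inter> T i)"
  by (auto simp: prod_set_def)

lemma pow_lt_prod:
  fixes t :: real
  assumes "0 \<le> t" "\<forall>i<n. t < f i" "n \<ge> 1"
  shows "t ^ n < (\<Prod>i<n. f i)"
  using assms
proof (induction n)
  case 0 then show ?case by simp
next
  case (Suc n)
  show ?case
  proof (cases "n = 0")
    case True then show ?thesis using Suc.prems by simp
  next
    case False
    then have ih: "t ^ n < (\<Prod>i<n. f i)" using Suc by auto
    have "t ^ Suc n = t * t ^ n" by simp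
    also have "\<dots> \<le> t * (\<Prod>i<n. f i)" using ih Suc.prems(1) by (intro mult_left_mono) auto
    also have "\<dots> < f n * (\<Prod>i<n. f i)"
      using Suc.prems ih \<open>0 \<le> t\<close> by (intro mult_strict_right_mono) (auto intro: le_less_trans[OF zero_le_power])
    finally show ?thesis by (simp add: mult.commute)
  qed
qed

lemma distinguishableD:
  assumes "distinguishable XX N mY n dn C"
  shows "finite C" "C \<noteq> {}" "C \<subseteq> seqs n XX"
    "\<forall>c1\<in>C. \<forall>c2\<in>C. c1 \<noteq> c2 \<longrightarrow>
        mY (S_N N c1 \<inter> S_N N c2) / mY (seqs n UNIV) \<le> dn / real (card C)"
  using assms unfolding distinguishable_def
  apply -
  apply (elim conjE, assumption)+
  done

theorem theorem12:
  fixes XX :: "'x::real_normed_vector set"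
    and N :: "'x \<Rightarrow> 'y set"
    and mX :: "'x list set \<Rightarrow> real"
    and mY :: "'y list set \<Rightarrow> real"
    and xstar :: 'x
    and \<delta> :: "nat \<Rightarrow> real"
    and \<delta>b :: real
    and \<Omega> :: "'w set"
    and Xb :: "'w \<Rightarrow> 'x"
    and Yb :: "'w \<Rightarrow> 'y"
  assumes tb: "totally_bounded XX"
    and mX_unc: "\<forall>n. uncertainty_fun (seqs n XX) mX"
    and mY_unc: "\<forall>n. uncertainty_fun (seqs n UNIV) mY"
    and mY_norm: "\<forall>n. mY (seqs n UNIV) = 1"
    and xstar: "xstar \<in> XX" "\<forall>x\<in>XX. m1 mY (N xstar) \<le> m1 mY (N x)"
    and delta1: "0 \<le> \<delta> 1" "\<delta> 1 < m1 mY (N xstar)"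
    and chan: "channel_pair XX N \<Omega> Xb Yb"
    and db_nonneg: "\<delta>b \<ge> 0"
    and db_F: "in_F1 mX mY \<Omega> Xb Yb \<delta>b"
    and db_le: "\<delta>b \<le> \<delta> 1 / m1 mY (uv_range \<Omega> Yb)"
    and opt: "I_delta \<Omega> (m1 mY) Yb Xb (\<delta>b / real (card (uv_range \<Omega> Xb))) =
      (SUP p \<in> {(C, \<delta>t). finite C \<and> C \<noteq> {} \<and> C \<subseteq> XX \<and> (\<forall>x\<in>C. N x \<noteq> {}) \<and>
                   \<delta>t \<ge> 0 \<and> in_F1 mX mY (chan_sample N C) fst snd \<delta>t \<and>
                   \<delta>t \<le> \<delta> 1 / m1 mY (uv_range (chan_sample N C) snd)}.
         I_delta (chan_sample N (fst p)) (m1 mY) snd fst (snd p / real (card (fst p))))"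
    and cond_a: "\<exists>F. overlap_family \<Omega> (m1 mY) Yb Xb (\<delta>b / real (card (uv_range \<Omega> Xb))) F \<and>
      (\<forall>x \<in> XX - uv_range \<Omega> Xb. \<exists>S\<in>F. N x \<subseteq> S)"
    and cond_b: "\<delta>b * (1 + 1 / real (card (uv_range \<Omega> Xb))) \<le> \<delta> 1 / m1 mY (uv_range \<Omega> Yb)"
    and cond_c: "\<forall>n>1. 0 \<le> \<delta> n \<and>
      \<delta> n \<le> (\<delta>b * m1 mY (N xstar) / real (card (uv_range \<Omega> Xb))) ^ n"
    and product: "\<forall>n\<ge>1. \<forall>S :: nat \<Rightarrow> 'y set. mY (prod_set n S) = (\<Prod>i<n. m1 mY (S i))"
    and union_bound: "\<forall>n. \<forall>S1 S2. S1 \<subseteq> seqs n UNIV \<longrightarrow> S2 \<subseteq> seqs n UNIV \<longrightarrow>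
      mY (S1 \<union> S2) \<le> mY S1 + mY S2"
  shows "capacity_star XX N mY \<delta> = I_delta \<Omega> (m1 mY) Yb Xb (\<delta>b / real (card (uv_range \<Omega> Xb)))"
proof -
  have uncY: "uncertainty_fun (seqs 1 UNIV) mY" using mY_unc by blast
  have uncX: "uncertainty_fun (seqs 1 XX) mX" using mX_unc by blast
  have mono: "\<And>A B. A \<subseteq> B \<Longrightarrow> m1 mY A \<le> m1 mY B" using m1_mono[OF uncY] by blast
  have pos: "\<And>S. S \<noteq> {} \<Longrightarrow> 0 < m1 mY S" using m1_pos[OF uncY] by blast
  have m1e: "m1 mY {} = 0" using m1_empty[OF uncY] .
  define V where "V = m1 mY (N xstar)"
  have hV: "\<And>x. x \<in> XX \<Longrightarrow> V \<le> m1 mY (N x)" using xstar(2) unfolding V_def by blast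
  have dV: "\<delta> 1 < V" "0 \<le> \<delta> 1" using delta1 unfolding V_def by auto
  have Nne: "\<And>x. x \<in> XX \<Longrightarrow> N x \<noteq> {}"
  proof
    fix x assume "x \<in> XX" "N x = {}"
    then have "V \<le> 0" using hV[of x] m1e by simp
    then show False using dV by linarith
  qed
  define RX where "RX = uv_range \<Omega> Xb"
  define RY where "RY = uv_range \<Omega> Yb"
  have finRX: "finite RX" and neRX: "RX \<noteq> {}" and RXsub: "RX \<subseteq> XX"
    and RYeq: "RY = (\<Union>x\<in>RX. N x)"
    and condY: "\<forall>x\<in>RX. uv_cond \<Omega> Yb Xb x = {y \<in> RY. y \<in> N x}"
    using chan unfolding channel_pair_def RX_def RY_def by blast+
  have condY': "\<And>x. x \<in> RX \<Longrightarrow> uv_cond \<Omega> Yb Xb x = N x"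
    using condY RYeq by blast
  define K where "K = card RX"
  have K1: "K \<ge> 1" using finRX neRX unfolding K_def by (simp add: Suc_le_eq card_gt_0_iff)
  obtain x0 where x0: "x0 \<in> RX" using neRX by blast
  have VRY: "V \<le> m1 mY RY"
  proof -
    have "N x0 \<subseteq> RY" using RYeq x0 by blast
    then show ?thesis using hV[of x0] mono[of "N x0" RY] x0 RXsub by auto
  qed
  have RYpos: "0 < m1 mY RY" using VRY dV by linarith
  define d' where "d' = \<delta>b / real K"
  have tau: "d' * m1 mY RY \<le> \<delta> 1 / (real K + 1)"
  proof -
    have Kp: "real K > 0" using K1 by simp
    have "\<delta>b * (1 + 1 / real K) * m1 mY RY \<le> \<delta> 1"
      using cond_b RYpos unfolding RY_def[symmetric] RX_def[symmetric] K_def[symmetric]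
      by (simp add: pos_le_divide_eq)
    moreover have eq: "\<delta>b * (1 + 1 / real K) = d' * (real K + 1)"
      unfolding d'_def using Kp by (simp add: field_simps)
    ultimately have "d' * (real K + 1) * m1 mY RY \<le> \<delta> 1" by (simp only: eq)
    then have "d' * m1 mY RY * (real K + 1) \<le> \<delta> 1" by (simp only: mult_ac)
    then show ?thesis by (simp add: pos_le_divide_eq)
  qed
  have tau0: "0 \<le> d' * m1 mY RY" unfolding d'_def using db_nonneg RYpos by simp
  have divle: "\<And>k::nat. \<delta> 1 / (real k + 1) \<le> \<delta> 1"
    using divide_left_mono[of 1 "real k + 1" "\<delta> 1" for k] dV(2) by simp
  have tauK: "\<delta> 1 / (real K + 1) \<le> \<delta> 1" by (rule divle)
  obtain F where fam: "overlap_family \<Omega> (m1 mY) Yb Xb d' F"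
    and ca: "\<forall>x \<in> XX - RX. \<exists>S\<in>F. N x \<subseteq> S"
    using cond_a unfolding RX_def[symmetric] K_def[symmetric] d'_def[symmetric] by blast
  have valF: "overlap_valid \<Omega> (m1 mY) Yb Xb d' F" using fam unfolding overlap_family_def by blast
  note FV = overlap_validD[OF valF, folded RY_def RX_def]
  have Fcover: "\<Union>F = RY" using FV(2) .
  have Fcond: "\<forall>S\<in>F. \<exists>w\<in>RX. N w \<subseteq> S" using FV(3) condY' by metis
  have Fdisj: "\<And>S1 S2. S1 \<in> F \<Longrightarrow> S2 \<in> F \<Longrightarrow> S1 \<noteq> S2 \<Longrightarrow> m1 mY (S1 \<inter> S2) \<le> d' * m1 mY RY"
    using FV(4) by blast
  have Fall: "\<forall>w\<in>RX. \<exists>S\<in>F. N w \<subseteq> S" using FV(5) condY' by metis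
  have sep: "\<And>S1 S2 a b. S1 \<in> F \<Longrightarrow> S2 \<in> F \<Longrightarrow> S1 \<noteq> S2 \<Longrightarrow> N a \<subseteq> S1 \<Longrightarrow> N b \<subseteq> S2 \<Longrightarrow>
      m1 mY (N a \<inter> N b) \<le> \<delta> 1 / (real K + 1)"
  proof -
    fix S1 S2 a b assume "S1 \<in> F" "S2 \<in> F" "S1 \<noteq> S2" "N a \<subseteq> S1" "N b \<subseteq> S2"
    then have "m1 mY (N a \<inter> N b) \<le> m1 mY (S1 \<inter> S2)" "m1 mY (S1 \<inter> S2) \<le> d' * m1 mY RY"
      using mono[of "N a \<inter> N b" "S1 \<inter> S2"] Fdisj by auto
    then show "m1 mY (N a \<inter> N b) \<le> \<delta> 1 / (real K + 1)" using tau by linarith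
  qed
  have uniq: "\<And>S1 S2 a. S1 \<in> F \<Longrightarrow> S2 \<in> F \<Longrightarrow> a \<in> XX \<Longrightarrow> N a \<subseteq> S1 \<Longrightarrow> N a \<subseteq> S2 \<Longrightarrow> S1 = S2"
  proof (rule ccontr)
    fix S1 S2 a assume h: "S1 \<in> F" "S2 \<in> F" "a \<in> XX" "N a \<subseteq> S1" "N a \<subseteq> S2" "S1 \<noteq> S2"
    then have "m1 mY (N a \<inter> N a) \<le> \<delta> 1 / (real K + 1)" using sep by blast
    then have "V \<le> \<delta> 1" using hV[OF h(3)] tauK by simp
    then show False using dV by linarith
  qed
  obtain r where r: "\<forall>S\<in>F. r S \<in> RX \<and> N (r S) \<subseteq> S"
  proof -
    have "\<forall>S\<in>F. \<exists>w. w \<in> RX \<and> N w \<subseteq> S" using Fcond by blast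
    then have "\<exists>r. \<forall>S\<in>F. r S \<in> RX \<and> N (r S) \<subseteq> S" by (rule bchoice)
    then show ?thesis using that by blast
  qed
  have rinj: "inj_on r F"
  proof (rule inj_onI)
    fix S1 S2 assume "S1 \<in> F" "S2 \<in> F" "r S1 = r S2"
    then have a: "r S1 \<in> XX" "N (r S1) \<subseteq> S1" "N (r S2) \<subseteq> S2" using r RXsub by blast+
    then have "N (r S1) \<subseteq> S2" using \<open>r S1 = r S2\<close> by simp
    note a this
    then show "S1 = S2" using a uniq[of S1 S2 "r S1"] \<open>S1 \<in> F\<close> \<open>S2 \<in> F\<close> by blast
  qed
  have rF: "r ` F \<subseteq> RX" using r by blast
  have finF: "finite F" using inj_on_finite[OF rinj rF finRX] .
  define K' where "K' = card F"
  have K'K: "K' \<le> K" unfolding K'_def K_def using card_inj_on_le[OF rinj rF finRX] .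
  have neF: "F \<noteq> {}"
  proof
    assume "F = {}"
    then have "RY = {}" using Fcover by simp
    then show False using RYpos m1e by simp
  qed
  have K'1: "K' \<ge> 1" using finF neF unfolding K'_def by (simp add: Suc_le_eq card_gt_0_iff)
  have sigma_ex: "\<forall>x\<in>XX. \<exists>S. S \<in> F \<and> N x \<subseteq> S" using ca Fall by blast
  obtain \<sigma> where sig: "\<forall>x\<in>XX. \<sigma> x \<in> F \<and> N x \<subseteq> \<sigma> x"
    using sigma_ex by (rule bchoice[elim_format]) blast
  have IXb: "I_delta \<Omega> (m1 mY) Yb Xb (\<delta>b / real (card (uv_range \<Omega> Xb))) = ereal (log 2 (real K'))"
    using I_delta_eq[OF fam finF] unfolding K'_def d'_def K_def RX_def .
  define \<theta> where "\<theta> = \<delta> 1 / (real K' + 1)"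
  have th0: "0 \<le> \<theta>" unfolding \<theta>_def using dV by simp
  have thK: "\<delta> 1 / (real K + 1) \<le> \<theta>" unfolding \<theta>_def using dV K'K
    by (intro divide_left_mono) auto
  have thV: "\<theta> < V"
  proof -
    have "\<theta> \<le> \<delta> 1" unfolding \<theta>_def by (rule divle)
    then show ?thesis using dV by linarith
  qed
  have key: "\<And>x x'. x \<in> XX \<Longrightarrow> x' \<in> XX \<Longrightarrow> \<sigma> x = \<sigma> x' \<Longrightarrow> \<theta> < m1 mY (N x \<inter> N x')"
  proof -
    fix x x' assume xX: "x \<in> XX" and x'X: "x' \<in> XX" and sx: "\<sigma> x = \<sigma> x'"
    show "\<theta> < m1 mY (N x \<inter> N x')"
    proof (cases "x = x'")
      case True
      then show ?thesis using hV[OF xX] thV by simp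
    next
      case False
      show ?thesis
      proof (rule ccontr)
        assume "\<not> \<theta> < m1 mY (N x \<inter> N x')"
        then have le: "m1 mY (N x \<inter> N x') \<le> \<theta>" by simp
        define S0 where "S0 = \<sigma> x"
        have S0F: "S0 \<in> F" and NxS0: "N x \<subseteq> S0" and Nx'S0: "N x' \<subseteq> S0"
          using sig xX x'X sx unfolding S0_def by auto
        define R where "R = r ` (F - {S0})"
        define C where "C = insert x (insert x' R)"
        have Rsub: "R \<subseteq> XX" unfolding R_def using rF RXsub by blast
        have notR: "\<And>z. z \<in> XX \<Longrightarrow> N z \<subseteq> S0 \<Longrightarrow> z \<notin> R"
        proof
          fix z assume z: "z \<in> XX" "N z \<subseteq> S0" "z \<in> R"
          then obtain S where S: "S \<in> F" "S \<noteq> S0" "z = r S" unfolding R_def by blast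
          then have "N z \<subseteq> S" using r by blast
          then have "S = S0" using uniq[OF S(1) S0F z(1)] z(2) by blast
          then show False using S(2) by blast
        qed
        have xR: "x \<notin> R" using notR[OF xX NxS0] .
        have x'R: "x' \<notin> R" using notR[OF x'X Nx'S0] .
        have finR: "finite R" unfolding R_def using finF by simp
        have cardR: "card R = K' - 1"
        proof -
          have "inj_on r (F - {S0})" using rinj by (rule inj_on_subset) blast
          then have "card R = card (F - {S0})" unfolding R_def by (rule card_image)
          also have "\<dots> = K' - 1" unfolding K'_def using S0F finF by simp
          finally show ?thesis .
        qed
        have cardC: "card C = K' + 1"
        proof -
          have "card C = Suc (Suc (card R))"
            unfolding C_def using finR xR x'R False by simp
          then show ?thesis using cardR K'1 by simp
        qed
        have finC: "finite C" unfolding C_def using finR by simp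
        have neC: "C \<noteq> {}" unfolding C_def by simp
        have CX: "C \<subseteq> XX" unfolding C_def using xX x'X Rsub by blast
        have CN: "\<forall>c\<in>C. N c \<noteq> {}" using CX Nne by blast
        have inR: "\<And>z. z \<in> R \<Longrightarrow> \<exists>S. S \<in> F \<and> S \<noteq> S0 \<and> N z \<subseteq> S \<and> z = r S"
          unfolding R_def using r by blast
        have small: "\<forall>c1\<in>C. \<forall>c2\<in>C. c1 \<noteq> c2 \<longrightarrow> m1 mY (N c1 \<inter> N c2) \<le> \<theta>"
        proof (intro ballI impI)
          fix c1 c2 assume c: "c1 \<in> C" "c2 \<in> C" "c1 \<noteq> c2"
          show "m1 mY (N c1 \<inter> N c2) \<le> \<theta>"
          proof (cases "c1 \<in> R")
            case c1R: True
            then obtain S1 where S1: "S1 \<in> F" "S1 \<noteq> S0" "N c1 \<subseteq> S1" "c1 = r S1" using inR by blast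
            show ?thesis
            proof (cases "c2 \<in> R")
              case True
              then obtain S2 where S2: "S2 \<in> F" "S2 \<noteq> S0" "N c2 \<subseteq> S2" "c2 = r S2" using inR by blast
              have "S1 \<noteq> S2" using S1(4) S2(4) c(3) by blast
              then show ?thesis using sep[OF S1(1) S2(1) _ S1(3) S2(3)] thK by linarith
            next
              case False
              then have "N c2 \<subseteq> S0" using c(2) NxS0 Nx'S0 unfolding C_def by blast
              then show ?thesis using sep[OF S1(1) S0F S1(2) S1(3)] thK by fastforce
            qed
          next
            case c1R: False
            then have c1S0: "N c1 \<subseteq> S0" and c1xx: "c1 = x \<or> c1 = x'"
              using c(1) NxS0 Nx'S0 unfolding C_def by blast+
            show ?thesis
            proof (cases "c2 \<in> R")
              case True
              then obtain S2 where S2: "S2 \<in> F" "S2 \<noteq> S0" "N c2 \<subseteq> S2" "c2 = r S2" using inR by blast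
              have "S0 \<noteq> S2" using S2(2) by blast
              then show ?thesis using sep[OF S0F S2(1) _ c1S0 S2(3)] thK by linarith
            next
              case False
              then have "c2 = x \<or> c2 = x'" using c(2) unfolding C_def by blast
              then have "N c1 \<inter> N c2 = N x \<inter> N x'" using c1xx c(3) by blast
              then show ?thesis using le by simp
            qed
          qed
        qed
        define RYC where "RYC = (\<Union>c\<in>C. N c)"
        have RYCpos: "0 < m1 mY RYC" unfolding RYC_def using neC CN pos by blast
        define \<delta>t where "\<delta>t = \<delta> 1 / m1 mY RYC"
        have dt0: "0 \<le> \<delta>t" unfolding \<delta>t_def using dV RYCpos by simp
        let ?\<Omega> = "chan_sample N C"
        have rf: "uv_range ?\<Omega> fst = C" using chan_range_fst[OF CN] .
        have rs: "uv_range ?\<Omega> snd = RYC" unfolding RYC_def by (rule chan_range_snd)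
        have cardrf: "real (card (uv_range ?\<Omega> fst)) = real K' + 1" using rf cardC by simp
        have thC: "\<theta> = \<delta>t / (real K' + 1) * m1 mY RYC"
          unfolding \<theta>_def \<delta>t_def using RYCpos by simp
        have inF1: "in_F1 mX mY ?\<Omega> fst snd \<delta>t"
          unfolding in_F1_def
        proof (rule disjI2)
          have A1: "set_preceq (assoc ?\<Omega> (m1 mX) fst snd) 1"
            unfolding set_preceq_def assoc_def
          proof (intro ballI)
            fix a assume "a \<in> {m1 mX (uv_cond ?\<Omega> fst snd w1 \<inter> uv_cond ?\<Omega> fst snd w2) / m1 mX (uv_range ?\<Omega> fst) |w1 w2.
              w1 \<in> uv_range ?\<Omega> snd \<and> w2 \<in> uv_range ?\<Omega> snd \<and> w1 \<noteq> w2} - {0}"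
            then obtain w1 w2 where a: "a = m1 mX (uv_cond ?\<Omega> fst snd w1 \<inter> uv_cond ?\<Omega> fst snd w2) / m1 mX (uv_range ?\<Omega> fst)"
              by blast
            have sub: "uv_cond ?\<Omega> fst snd w1 \<inter> uv_cond ?\<Omega> fst snd w2 \<subseteq> uv_range ?\<Omega> fst"
              using uv_cond_sub[of ?\<Omega> fst snd w1] by blast
            have "m1 mX (uv_cond ?\<Omega> fst snd w1 \<inter> uv_cond ?\<Omega> fst snd w2) \<le> m1 mX (uv_range ?\<Omega> fst)"
              using m1X_mono[OF uncX sub] CX rf by simp
            moreover have "0 < m1 mX (uv_range ?\<Omega> fst)" using m1X_pos[OF uncX] neC CX rf by simp
            ultimately show "a \<le> 1" unfolding a by simp
          qed
          have A2: "set_preceq (assoc ?\<Omega> (m1 mY) snd fst) (\<delta>t / real (card (uv_range ?\<Omega> fst)))"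
            unfolding set_preceq_def assoc_def
          proof (intro ballI)
            fix a assume "a \<in> {m1 mY (uv_cond ?\<Omega> snd fst w1 \<inter> uv_cond ?\<Omega> snd fst w2) / m1 mY (uv_range ?\<Omega> snd) |w1 w2.
              w1 \<in> uv_range ?\<Omega> fst \<and> w2 \<in> uv_range ?\<Omega> fst \<and> w1 \<noteq> w2} - {0}"
            then obtain w1 w2 where a: "a = m1 mY (uv_cond ?\<Omega> snd fst w1 \<inter> uv_cond ?\<Omega> snd fst w2) / m1 mY (uv_range ?\<Omega> snd)"
              and w: "w1 \<in> C" "w2 \<in> C" "w1 \<noteq> w2"
              unfolding rf by blast
            have "a = m1 mY (N w1 \<inter> N w2) / m1 mY RYC"
              unfolding a rs using chan_cond_snd[OF w(1), of N] chan_cond_snd[OF w(2), of N] by simp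
            also have "\<dots> \<le> \<theta> / m1 mY RYC"
              using small w RYCpos by (intro divide_right_mono) auto
            also have "\<dots> = \<delta>t / real (card (uv_range ?\<Omega> fst))"
              unfolding cardrf thC using RYCpos by simp
            finally show "a \<le> \<delta>t / real (card (uv_range ?\<Omega> fst))" .
          qed
          show "a_assoc ?\<Omega> (m1 mX) (m1 mY) fst snd 1 (\<delta>t / real (card (uv_range ?\<Omega> fst)))"
            unfolding a_assoc_def using A1 A2 by blast
        qed
        have memb: "(C, \<delta>t) \<in> {(C, \<delta>t). finite C \<and> C \<noteq> {} \<and> C \<subseteq> XX \<and> (\<forall>x\<in>C. N x \<noteq> {}) \<and>
                   \<delta>t \<ge> 0 \<and> in_F1 mX mY (chan_sample N C) fst snd \<delta>t \<and>
                   \<delta>t \<le> \<delta> 1 / m1 mY (uv_range (chan_sample N C) snd)}"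
          using finC neC CX CN dt0 inF1 rs unfolding \<delta>t_def by simp
        have famC: "overlap_family ?\<Omega> (m1 mY) snd fst (\<delta>t / real (card C)) (N ` C)"
        proof (rule chan_family[OF uncY CN])
          have eq: "\<delta>t / real (card C) * m1 mY (\<Union>x\<in>C. N x) = \<theta>"
            using thC cardC unfolding RYC_def by simp
          show "\<forall>x\<in>C. \<delta>t / real (card C) * m1 mY (\<Union>x\<in>C. N x) < m1 mY (N x)"
            unfolding eq using thV hV CX by fastforce
          show "\<forall>x\<in>C. \<forall>x'\<in>C. x \<noteq> x' \<longrightarrow> m1 mY (N x \<inter> N x') \<le> \<delta>t / real (card C) * m1 mY (\<Union>x\<in>C. N x)"
            unfolding eq using small .
        qed
        have injN: "inj_on N C"
        proof (rule inj_onI, rule ccontr)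
          fix c1 c2 assume c: "c1 \<in> C" "c2 \<in> C" "N c1 = N c2" "c1 \<noteq> c2"
          then have "m1 mY (N c1) \<le> \<theta>" using small by force
          moreover have "V \<le> m1 mY (N c1)" using hV CX c(1) by blast
          ultimately show False using thV by linarith
        qed
        have IC: "I_delta ?\<Omega> (m1 mY) snd fst (\<delta>t / real (card C)) = ereal (log 2 (real K' + 1))"
          using I_delta_eq[OF famC] finC card_image[OF injN] cardC by (simp add: add.commute)
        have "I_delta ?\<Omega> (m1 mY) snd fst (\<delta>t / real (card C)) \<le> I_delta \<Omega> (m1 mY) Yb Xb (\<delta>b / real (card (uv_range \<Omega> Xb)))"
          unfolding opt using memb by (rule SUP_upper2) simp
        then have "log 2 (real K' + 1) \<le> log 2 (real K')" unfolding IC IXb by simp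
        moreover have "log 2 (real K') < log 2 (real K' + 1)" using K'1 by simp
        ultimately show False by linarith
      qed
    qed
  qed
  have base: "\<delta>b * V / real K \<le> \<theta>"
  proof -
    have "\<delta>b * V / real K \<le> \<delta>b * m1 mY RY / real K"
      using VRY db_nonneg by (intro divide_right_mono mult_left_mono) auto
    also have "\<dots> = d' * m1 mY RY" unfolding d'_def by simp
    finally show ?thesis using tau thK by linarith
  qed
  have base0: "0 \<le> \<delta>b * V / real K" using db_nonneg dV by simp
  have codebound: "\<And>n C. n \<ge> 1 \<Longrightarrow> distinguishable XX N mY n (\<delta> n) C \<Longrightarrow> card C \<le> K' ^ n"
  proof (rule ccontr)
    fix n C assume n1: "n \<ge> 1" and dist: "distinguishable XX N mY n (\<delta> n) C" and gt: "\<not> card C \<le> K' ^ n"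
    have finC: "finite C" and CS: "C \<subseteq> seqs n XX"
      and pw: "\<forall>c1\<in>C. \<forall>c2\<in>C. c1 \<noteq> c2 \<longrightarrow>
        mY (S_N N c1 \<inter> S_N N c2) / mY (seqs n UNIV) \<le> \<delta> n / real (card C)"
      using distinguishableD[OF dist] by auto
    have img: "map \<sigma> ` C \<subseteq> seqs n F"
      using CS sig unfolding seqs_def by fastforce
    have finF': "finite (seqs n F)" unfolding seqs_def using finite_lists_length_eq[OF finF, of n] by (simp add: conj_commute)
    have cardS: "card (seqs n F) = K' ^ n" unfolding seqs_def K'_def
      using card_lists_length_eq[OF finF, of n] by (simp add: conj_commute)
    have "\<not> inj_on (map \<sigma>) C"
    proof
      assume "inj_on (map \<sigma>) C"
      then have "card C \<le> card (seqs n F)" using card_inj_on_le[OF _ img finF'] by blast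
      then show False using gt cardS by simp
    qed
    then obtain c1 c2 where c: "c1 \<in> C" "c2 \<in> C" "c1 \<noteq> c2" "map \<sigma> c1 = map \<sigma> c2"
      unfolding inj_on_def by blast
    have len: "length c1 = n" "length c2 = n" and setc: "set c1 \<subseteq> XX" "set c2 \<subseteq> XX"
      using c CS unfolding seqs_def by auto
    have SN: "S_N N c1 \<inter> S_N N c2 = prod_set n (\<lambda>i. N (c1 ! i) \<inter> N (c2 ! i))"
      unfolding S_N_def len prod_set_Int ..
    have ov: "mY (S_N N c1 \<inter> S_N N c2) / mY (seqs n UNIV) = (\<Prod>i<n. m1 mY (N (c1 ! i) \<inter> N (c2 ! i)))"
    proof -
      have p: "mY (prod_set n (\<lambda>i. N (c1 ! i) \<inter> N (c2 ! i))) = (\<Prod>i<n. m1 mY (N (c1 ! i) \<inter> N (c2 ! i)))"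
        using product n1 by blast
      have q: "mY (seqs n UNIV) = 1" using mY_norm by blast
      show ?thesis unfolding SN p q by simp
    qed
    have fac: "\<forall>i<n. \<theta> < m1 mY (N (c1 ! i) \<inter> N (c2 ! i))"
    proof (intro allI impI)
      fix i assume i: "i < n"
      have "c1 ! i \<in> set c1" using len i by (intro nth_mem) simp
      then have a: "c1 ! i \<in> XX" using setc by blast
      have "c2 ! i \<in> set c2" using len i by (intro nth_mem) simp
      then have b: "c2 ! i \<in> XX" using setc by blast
      have "map \<sigma> c1 ! i = map \<sigma> c2 ! i" using c(4) by simp
      then have e: "\<sigma> (c1 ! i) = \<sigma> (c2 ! i)" using len i by simp
      show "\<theta> < m1 mY (N (c1 ! i) \<inter> N (c2 ! i))" by (rule key[OF a b e])
    qed
    have big: "\<theta> ^ n < mY (S_N N c1 \<inter> S_N N c2) / mY (seqs n UNIV)"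
      unfolding ov using pow_lt_prod[OF th0 fac n1] .
    have cC: "real K' ^ n + 1 \<le> real (card C)"
    proof -
      have "K' ^ n + 1 \<le> card C" using gt by simp
      then have "real (K' ^ n + 1) \<le> real (card C)" by (rule of_nat_mono)
      then show ?thesis by simp
    qed
    have "0 \<le> real K' ^ n" by simp
    then have cpos: "1 \<le> real (card C)" using cC by linarith
    have small: "\<delta> n / real (card C) \<le> \<theta> ^ n"
    proof (cases "n = 1")
      case True
      have "\<delta> 1 / real (card C) \<le> \<delta> 1 / (real K' + 1)"
        using cC True dV(2) K'1 by (intro divide_left_mono) auto
      then show ?thesis using True unfolding \<theta>_def by simp
    next
      case False
      then have n2: "n > 1" using n1 by simp
      have dn: "0 \<le> \<delta> n" "\<delta> n \<le> (\<delta>b * V / real K) ^ n"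
        using cond_c n2 unfolding V_def K_def RX_def by auto
      have "\<delta> n / real (card C) \<le> \<delta> n / 1" using dn(1) cpos by (intro divide_left_mono) auto
      then have "\<delta> n / real (card C) \<le> \<delta> n" by simp
      also have "\<dots> \<le> (\<delta>b * V / real K) ^ n" by (rule dn(2))
      also have "\<dots> \<le> \<theta> ^ n" using base base0 by (rule power_mono)
      finally show ?thesis .
    qed
    have "mY (S_N N c1 \<inter> S_N N c2) / mY (seqs n UNIV) \<le> \<delta> n / real (card C)" using pw c by blast
    then show False using big small by linarith
  qed
  have rate_le: "\<And>n. n \<ge> 1 \<Longrightarrow> rate XX N mY n (\<delta> n) \<le> ereal (log 2 (real K'))"
  proof -
    fix n :: nat assume n1: "n \<ge> 1"
    show "rate XX N mY n (\<delta> n) \<le> ereal (log 2 (real K'))"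
      unfolding rate_def
    proof (rule SUP_least)
      fix C assume "C \<in> {C. distinguishable XX N mY n (\<delta> n) C}"
      then have dist: "distinguishable XX N mY n (\<delta> n) C" by simp
      then have cb: "card C \<le> K' ^ n" using codebound n1 by blast
      have "finite C" "C \<noteq> {}" using distinguishableD[OF dist] by auto
      then have c0: "0 < real (card C)" by (simp add: card_gt_0_iff)
      have "real (card C) \<le> real K' ^ n" using cb by (metis of_nat_le_iff of_nat_power)
      moreover have "0 < real K' ^ n" using K'1 by simp
      ultimately have "log 2 (real (card C)) \<le> log 2 (real K' ^ n)" using c0 by (subst log_le_cancel_iff) auto
      also have "\<dots> = real n * log 2 (real K')" by (simp add: log_nat_power)
      finally have "log 2 (real (card C)) / real n \<le> log 2 (real K')"
        using n1 by (simp add: divide_le_eq mult.commute)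
      then show "ereal (log 2 (real (card C)) / real n) \<le> ereal (log 2 (real K'))" by simp
    qed
  qed
  have rate1: "ereal (log 2 (real K')) \<le> rate XX N mY 1 (\<delta> 1)"
  proof -
    define C0 where "C0 = (\<lambda>c. [c]) ` (r ` F)"
    have injC: "inj_on (\<lambda>c. [c]) (r ` F)" by (simp add: inj_on_def)
    have cardC0: "card C0 = K'" unfolding C0_def K'_def
      using card_image[OF injC] card_image[OF rinj] by simp
    have dist: "distinguishable XX N mY 1 (\<delta> 1) C0"
      unfolding distinguishable_def
    proof (intro conjI ballI impI)
      show "finite C0" unfolding C0_def using finF by simp
      show "C0 \<noteq> {}" unfolding C0_def using neF by simp
      show "C0 \<subseteq> seqs 1 XX" unfolding C0_def seqs_def using rF RXsub by force
    next
      fix c1 c2 assume c: "c1 \<in> C0" "c2 \<in> C0" "c1 \<noteq> c2"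
      then obtain S1 S2 where S: "S1 \<in> F" "S2 \<in> F" "c1 = [r S1]" "c2 = [r S2]" unfolding C0_def by blast
      then have "S1 \<noteq> S2" using c(3) by blast
      then have le: "m1 mY (N (r S1) \<inter> N (r S2)) \<le> \<delta> 1 / (real K + 1)"
        using sep[OF S(1) S(2)] r S(1,2) by blast
      have SN: "S_N N c1 \<inter> S_N N c2 = prod_set 1 (\<lambda>i. N (r S1) \<inter> N (r S2))"
        unfolding S(3,4) S_N_def by (auto simp: prod_set_def)
      have "mY (S_N N c1 \<inter> S_N N c2) / mY (seqs 1 UNIV) = m1 mY (N (r S1) \<inter> N (r S2))"
        unfolding SN using product mY_norm by simp
      also have "\<dots> \<le> \<delta> 1 / (real K + 1)" by (rule le)
      also have "\<dots> \<le> \<delta> 1 / real (card C0)"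
        unfolding cardC0 using K'K K'1 dV(2) by (intro divide_left_mono) auto
      finally show "mY (S_N N c1 \<inter> S_N N c2) / mY (seqs 1 UNIV) \<le> \<delta> 1 / real (card C0)" .
    qed
    have "ereal (log 2 (real (card C0)) / real (1::nat)) \<le> rate XX N mY 1 (\<delta> 1)"
      unfolding rate_def using dist by (intro SUP_upper) simp
    then show ?thesis using cardC0 by simp
  qed
  have "capacity_star XX N mY \<delta> = ereal (log 2 (real K'))"
    unfolding capacity_star_def
  proof (rule antisym)
    show "(SUP n\<in>{1..}. rate XX N mY n (\<delta> n)) \<le> ereal (log 2 (real K'))"
      using rate_le by (intro SUP_least) simp
    show "ereal (log 2 (real K')) \<le> (SUP n\<in>{1..}. rate XX N mY n (\<delta> n))"
      by (rule SUP_upper2[of 1]) (simp, rule rate1)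
  qed
  then show ?thesis using IXb by simp
qed

end
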